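(* Let $m$ be an odd positive integer. If $K^*_{2m}$ admits a $\vec{C}_m$-factorization, then $K^*_{6m}$ admits a $\vec{C}_{3m}$-factorization.
   Context: $K^*_n$ denotes the complete symmetric digraph on $n$ vertices (both arcs $(u,v),(v,u)$ for all distinct $u,v$; no loops). A $\vec{C}_\ell$-factor of a digraph is a spanning subdigraph that is a disjoint union of directed cycles of length $\ell$; a $\vec{C}_\ell$-factorization is a partition of the arc set into $\vec{C}_\ell$-factors. *)

theory Defs
  imports Main
begin

definition complete_sym_digraph :: "nat \<Rightarrow> (nat \<times> nat) set" where
  "complete_sym_digraph n = {(u, v). u < n \<and> v < n \<and> u \<noteq> v}"

definition dcycle_arcs :: "'a list \<Rightarrow> ('a \<times> 'a) set" where
  "dcycle_arcs vs = {(vs ! i, vs ! ((i + 1) mod length vs)) | i. i < length vs}"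

definition is_dcycle_factor :: "nat \<Rightarrow> 'a set \<Rightarrow> ('a \<times> 'a) set \<Rightarrow> ('a \<times> 'a) set \<Rightarrow> bool" where
  "is_dcycle_factor l V A F \<longleftrightarrow> F \<subseteq> A \<and>
     (\<exists>Cs. (\<forall>c\<in>Cs. distinct c \<and> length c = l) \<and>
           (\<forall>c\<in>Cs. \<forall>d\<in>Cs. c \<noteq> d \<longrightarrow> set c \<inter> set d = {}) \<and>
           \<Union>(set ` Cs) = V \<and>
           F = \<Union>(dcycle_arcs ` Cs))"

definition has_dcycle_factorization :: "nat \<Rightarrow> 'a set \<Rightarrow> ('a \<times> 'a) set \<Rightarrow> bool" where
  "has_dcycle_factorization l V A \<longleftrightarrow>
     (\<exists>\<F>. (\<forall>F\<in>\<F>. is_dcycle_factor l V A F) \<and>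
          (\<forall>F\<in>\<F>. \<forall>G\<in>\<F>. F \<noteq> G \<longrightarrow> F \<inter> G = {}) \<and>
          \<Union>\<F> = A)"

end

theory Submission
  imports Defs
begin


lemma mod_inj_lt:
  fixes a p q N :: nat
  assumes "(a + p) mod N = (a + q) mod N" "p < N" "q < N"
  shows "p = q"
proof -
  have A: "x = y" if "x \<le> y" "(a + x) mod N = (a + y) mod N" "y < N" for x y
  proof -
    have "N dvd (a + y) - (a + x)" using mod_eq_dvd_iff_nat[of "a + x" "a + y" N] that by simp
    then have "N dvd y - x" by simp
    moreover have "y - x < N" using that by simp
    ultimately have "y - x = 0" using nat_dvd_not_less by fastforce
    then show ?thesis using that by simp
  qed
  show ?thesis
  proof (cases "p \<le> q")
    case True then show ?thesis using A assms by blast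
  next
    case False then show ?thesis using A[of q p] assms by simp
  qed
qed

lemma cyc_from_pos:
  fixes \<sigma> :: "'a \<Rightarrow> 'a" and pos :: "'a \<Rightarrow> nat"
  assumes fin: "finite W" and cW: "card W = N" and z: "z \<in> W"
    and cl: "\<And>x. x \<in> W \<Longrightarrow> \<sigma> x \<in> W"
    and ps: "\<And>x. x \<in> W \<Longrightarrow> pos (\<sigma> x) mod N = (pos x + 1) mod N"
  shows "\<exists>L. distinct L \<and> length L = N \<and> set L = W \<and> dcycle_arcs L = (\<lambda>x. (x, \<sigma> x)) ` W"
proof -
  have N0: "N > 0" using cW fin z by (metis card_gt_0_iff empty_iff)
  define L where "L = map (\<lambda>p. (\<sigma>^^p) z) [0..<N]"
  have inW: "(\<sigma>^^p) z \<in> W" for p by (induction p) (auto simp: z cl)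
  have pp: "pos ((\<sigma>^^p) z) mod N = (pos z + p) mod N" for p
  proof (induction p)
    case 0 then show ?case by simp
  next
    case (Suc p)
    have "pos ((\<sigma>^^Suc p) z) mod N = (pos ((\<sigma>^^p) z) + 1) mod N" using ps[OF inW[of p]] by simp
    also have "\<dots> = (pos ((\<sigma>^^p) z) mod N + 1) mod N" by (simp add: mod_Suc_eq)
    also have "\<dots> = ((pos z + p) mod N + 1) mod N" using Suc by simp
    also have "\<dots> = (pos z + Suc p) mod N" by (simp add: mod_Suc_eq)
    finally show ?case .
  qed
  have inj: "p = q" if "(\<sigma>^^p) z = (\<sigma>^^q) z" "p < N" "q < N" for p q
    using mod_inj_lt[of "pos z" p N q] pp[of p] pp[of q] that by simp
  have dL: "distinct L" unfolding L_def distinct_map using inj by (auto simp: inj_on_def)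
  have lL: "length L = N" by (simp add: L_def)
  have sL: "set L = W"
  proof -
    have "set L \<subseteq> W" using inW by (auto simp: L_def)
    moreover have "card (set L) = card W" using dL lL cW by (simp add: distinct_card)
    ultimately show ?thesis using fin by (simp add: card_subset_eq)
  qed
  have bk: "(\<sigma>^^N) z = z"
  proof -
    have "(\<sigma>^^N) z \<in> set L" using inW sL by simp
    then obtain p where p: "p < N" "(\<sigma>^^N) z = (\<sigma>^^p) z" by (auto simp: L_def)
    have "(pos z + p) mod N = (pos z + 0) mod N" using pp[of p] pp[of N] p by simp
    then have "p = 0" using mod_inj_lt[of "pos z" p N 0] p N0 by simp
    then show ?thesis using p by simp
  qed
  have nxt: "L ! ((i + 1) mod N) = \<sigma> (L ! i)" if "i < N" for i
  proof (cases "i + 1 < N")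
    case True then show ?thesis using that by (simp add: L_def del: upt_Suc)
  next
    case False
    then have "i + 1 = N" using that by simp
    then have "L ! ((i + 1) mod N) = z" using N0 by (simp add: L_def)
    also have "\<dots> = (\<sigma>^^(Suc i)) z" using bk \<open>i + 1 = N\<close> by simp
    finally show ?thesis using that by (simp add: L_def del: upt_Suc)
  qed
  have "dcycle_arcs L = (\<lambda>x. (x, \<sigma> x)) ` W"
  proof -
    have "dcycle_arcs L = {(L ! i, \<sigma> (L ! i)) | i. i < N}"
      unfolding dcycle_arcs_def lL using nxt by auto
    also have "\<dots> = (\<lambda>x. (x, \<sigma> x)) ` set L" by (force simp: in_set_conv_nth lL)
    finally show ?thesis using sL by simp
  qed
  then show ?thesis using dL lL sL by blast
qed

lemma dcycle_arcs_alt: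
  "dcycle_arcs L = (\<lambda>i. (L ! i, L ! ((i + 1) mod length L))) ` {..<length L}"
  unfolding dcycle_arcs_def by auto

lemma dcycle_arcs_map:
  "dcycle_arcs (map g L) = (\<lambda>(a, b). (g a, g b)) ` dcycle_arcs L"
proof -
  have "(Suc x mod length L) < length L" if "x < length L" for x using that by (intro mod_less_divisor) auto
  then show ?thesis
  unfolding dcycle_arcs_alt image_image by (auto intro!: image_cong)
qed



definition bL :: "nat \<Rightarrow> nat" where "bL m = (2*m) mod 3"
definition sL :: "nat \<Rightarrow> nat \<Rightarrow> nat \<Rightarrow> nat" where
  "sL m t k = (if k < bL m then 3 - t else t) + (if k = m - 1 then 1 else 0)"
definition hL :: "nat \<Rightarrow> nat \<Rightarrow> nat \<Rightarrow> nat" where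
  "hL m t k = min k (bL m) * (3 - t) + (k - min k (bL m)) * t"
definition sigL :: "nat \<Rightarrow> nat \<Rightarrow> nat \<times> nat \<Rightarrow> nat \<times> nat" where
  "sigL m t x = ((fst x + 1) mod m, (snd x + sL m t (fst x)) mod 3)"
definition posL :: "nat \<Rightarrow> nat \<Rightarrow> nat \<times> nat \<Rightarrow> nat" where
  "posL m t x = ((snd x + 2 * hL m t (fst x)) mod 3) * m + fst x"

lemma hL_Suc:
  assumes "t < 3"
  shows "hL m t (Suc k) = hL m t k + (if k < bL m then 3 - t else t)"
proof (cases "k < bL m")
  case True
  then have "min (Suc k) (bL m) = Suc k" "min k (bL m) = k" by auto
  then show ?thesis using True assms unfolding hL_def by (simp add: algebra_simps)
next
  case False
  then have "min (Suc k) (bL m) = bL m" "min k (bL m) = bL m" "Suc k - bL m = Suc (k - bL m)" by auto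
  then show ?thesis using False assms unfolding hL_def by simp
qed

lemma bL_le: "bL m \<le> 2" unfolding bL_def by simp

lemma bL_decomp:
  assumes "m \<ge> 3"
  shows "\<exists>j. m = 2 * bL m + 3 * j"
proof -
  obtain q r where m: "m = 3 * q + r" "r < 3"
    by (metis mod_div_mult_eq mod_less_divisor zero_less_numeral mult.commute add.commute)
  have bl: "bL m = (2 * r) mod 3"
  proof -
    have "2 * m = 2 * r + (2 * q) * 3" using m by simp
    then show ?thesis unfolding bL_def by (metis mod_mult_self1)
  qed
  have "r = 0 \<or> r = 1 \<or> r = 2" using m by auto
  then show ?thesis
  proof (elim disjE)
    assume r: "r = 0" then show ?thesis using m bl by (intro exI[of _ q]) simp
  next
    assume r: "r = 1"
    then have "q \<ge> 1" using m assms by simp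
    then show ?thesis using m bl r by (intro exI[of _ "q - 1"]) auto
  next
    assume r: "r = 2" then show ?thesis using m bl by (intro exI[of _ q]) simp
  qed
qed

lemma aux_lin:
  fixes b m j t :: nat
  assumes "m = 2 * b + 3 * j" "b \<le> m - 1" "t < 3" "m \<ge> 3"
  shows "b * (3 - t) + (m - 1 - b) * t + t = 3 * (b + j * t)"
proof -
  have "b + 3 * j \<ge> 1" using assms by simp
  have "t = 0 \<or> t = 1 \<or> t = 2" using assms by auto
  then show ?thesis
  proof (elim disjE)
    assume "t = 0" then show ?thesis by simp
  next
    assume "t = 1" then show ?thesis using assms(1,2) \<open>b + 3 * j \<ge> 1\<close> by simp
  next
    assume "t = 2" then show ?thesis using assms(1,2) \<open>b + 3 * j \<ge> 1\<close> by simp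
  qed
qed

lemma hL_last:
  assumes "t < 3" "m \<ge> 3"
  shows "(i + 2 * hL m t (m - 1) + 1) mod 3 = (i + t + 1) mod 3"
proof -
  have b: "bL m \<le> m - 1" using bL_le[of m] assms by simp
  then have h: "hL m t (m - 1) = bL m * (3 - t) + (m - 1 - bL m) * t" unfolding hL_def by (simp add: min_absorb2)
  obtain j where j: "m = 2 * bL m + 3 * j" using bL_decomp assms by blast
  have c: "hL m t (m - 1) + t = 3 * (bL m + j * t)"
  proof -
    show ?thesis unfolding h using aux_lin[OF j b assms(1) assms(2)] .
  qed
  have e: "(i + 2 * hL m t (m - 1) + 1) + t * 3 = (i + t + 1) + (2 * (bL m + j * t)) * 3"
    using c by arith
  have "(i + 2 * hL m t (m - 1) + 1) mod 3 = ((i + 2 * hL m t (m - 1) + 1) + t * 3) mod 3"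
    by (simp only: mod_mult_self1)
  also have "\<dots> = (i + t + 1) mod 3" unfolding e by (simp only: mod_mult_self1)
  finally show ?thesis .
qed

lemma posL_step:
  assumes m3: "m \<ge> 3" and t3: "t < 3" and k: "k < m" and i: "i < 3"
  shows "posL m t (sigL m t (k, i)) = (if posL m t (k, i) + 1 = 3 * m then 0 else posL m t (k, i) + 1)"
proof (cases "k + 1 < m")
  case True
  define r where "r = (i + 2 * hL m t k) mod 3"
  define d where "d = (if k < bL m then 3 - t else t)"
  have hs: "hL m t (k+1) = hL m t k + d" using hL_Suc[OF t3] unfolding d_def by simp
  have km: "k \<noteq> m - 1" using True by simp
  have sl: "sL m t k = d" unfolding sL_def d_def using km by simp
  have r': "((i + sL m t k) mod 3 + 2 * hL m t (k+1)) mod 3 = r"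
  proof -
    have "((i + d) mod 3 + 2 * (hL m t k + d)) mod 3 = (i + d + 2 * (hL m t k + d)) mod 3"
      by (simp add: mod_add_left_eq)
    also have "\<dots> = (i + 2 * hL m t k + d * 3) mod 3" by (simp add: algebra_simps)
    also have "\<dots> = r" unfolding r_def by (simp only: mod_mult_self1)
    finally show ?thesis unfolding sl hs .
  qed
  have r3: "r < 3" unfolding r_def by simp
  have "posL m t (sigL m t (k, i)) = r * m + (k + 1)"
    using True r' unfolding posL_def sigL_def by simp
  moreover have "posL m t (k, i) = r * m + k" unfolding posL_def r_def by simp
  moreover have "r * m + k + 1 \<noteq> 3 * m"
  proof -
    have "r \<le> 2" using r3 by simp
    then have "r * m \<le> 2 * m" by simp
    then show ?thesis using True by linarith
  qed
  ultimately show ?thesis by simp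
next
  case False
  then have km: "k = m - 1" using k by simp
  define r where "r = (i + 2 * hL m t k) mod 3"
  have b: "\<not> (m - 1 < bL m)" using bL_le[of m] m3 by simp
  have sl: "sL m t k = t + 1" unfolding sL_def using km b by simp
  have r': "(i + sL m t k) mod 3 = (r + 1) mod 3"
  proof -
    have "(r + 1) mod 3 = (i + 2 * hL m t k + 1) mod 3" unfolding r_def by (simp add: mod_Suc_eq)
    also have "\<dots> = (i + t + 1) mod 3" using hL_last[OF t3 m3, of i] km by simp
    finally show ?thesis unfolding sl by simp
  qed
  have h0: "hL m t 0 = 0" unfolding hL_def by simp
  have s1: "sigL m t (k, i) = (0, (r + 1) mod 3)" unfolding sigL_def using km m3 r' by simp
  have "posL m t (sigL m t (k, i)) = ((r + 1) mod 3) * m" unfolding s1 posL_def by (simp add: h0)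
  moreover have "posL m t (k, i) + 1 = (r + 1) * m"
  proof -
    have "posL m t (k, i) = r * m + k" unfolding posL_def r_def by simp
    then show ?thesis using km m3 by simp
  qed
  moreover have "r < 3" unfolding r_def by simp
  ultimately show ?thesis using m3 by (cases "r = 2") auto
qed



definition tabH :: "(nat \<times> nat) list list list" where
  "tabH = [
    [[(0,1),(0,2),(1,1),(1,2),(1,0)],[(0,1),(0,2),(1,1),(1,2),(1,0)],[(1,1),(1,2),(0,1),(0,2),(1,0)]],
    [[(0,1),(0,2),(1,0),(1,1),(1,2)],[(0,1),(0,2),(1,0),(1,1),(1,2)],[(1,0),(1,1),(0,1),(0,2),(1,2)]],
    [[(1,0),(0,1),(0,2),(1,1),(1,2)],[(0,2),(0,1),(1,0),(1,1),(1,2)],[(0,2),(1,0),(1,1),(0,1),(1,2)]],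
    [[(0,1),(1,1),(0,2),(1,2),(1,0)],[(0,1),(0,2),(1,1),(1,2),(1,0)],[(1,1),(0,2),(1,2),(0,1),(1,0)]]]"

definition clH :: "nat \<Rightarrow> nat \<Rightarrow> nat" where
  "clH m k = (if k < m - 3 then 0 else if k = m - 3 then 1 else if k = m - 2 then 2 else 3)"

definition sigH :: "nat \<Rightarrow> nat \<Rightarrow> nat \<times> nat \<Rightarrow> nat \<times> nat" where
  "sigH m f x = ((fst x + fst (tabH ! clH m (fst x) ! snd x ! f)) mod m,
                 (snd x + snd (tabH ! clH m (fst x) ! snd x ! f)) mod 3)"

definition posH :: "nat \<Rightarrow> nat \<Rightarrow> nat \<times> nat \<Rightarrow> nat" where
  "posH m f x = (let k = fst x; i = snd x; h = m div 2; a = k div 2 in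
     if f = 0 then 3 * k + (if k = m - 2 then 2 - i else i)
     else if f = 1 then 3 * k + (if k \<le> m - 3 then [1,0,2] ! i else if k = m - 2 then i else 2 - i)
     else if f = 4 then k + m * (if k \<le> m - 3 then i else if k = m - 2 then (i + 1) mod 3 else (i + 2) mod 3)
     else if f = 2 then
       (if k \<le> m - 3 then (if k mod 2 = 0 then [3*a+3*h+1, 3*a, 3*a+3*h] ! i else [3*a+2, 3*a+3*h+2, 3*a+1] ! i)
        else if k = m - 2 then [6*h-1, 3*h-2, 6*h] ! i else [6*h+1, 3*h-1, 6*h+2] ! i)
     else
       (if k \<le> m - 3 then (if k mod 2 = 0 then [3*a, 3*a+3*h+2, 3*a+3*h+1] ! i else [3*a+3*h+3, 3*a+2, 3*a+1] ! i)
        else if k = m - 2 then [6*h+1, 3*h-2, 6*h] ! i else [3*h, 6*h+2, 3*h-1] ! i))"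

lemma sigH_U: "k < m - 3 \<Longrightarrow> sigH m f (k,i) = ((k + fst (tabH!0!i!f)) mod m, (i + snd (tabH!0!i!f)) mod 3)"
  by (simp add: sigH_def clH_def)
lemma sigH_X: "m \<ge> 3 \<Longrightarrow> k = m - 3 \<Longrightarrow> sigH m f (k,i) = ((k + fst (tabH!1!i!f)) mod m, (i + snd (tabH!1!i!f)) mod 3)"
  by (simp add: sigH_def clH_def)
lemma sigH_Y: "m \<ge> 3 \<Longrightarrow> k = m - 2 \<Longrightarrow> sigH m f (k,i) = ((k + fst (tabH!2!i!f)) mod m, (i + snd (tabH!2!i!f)) mod 3)"
  by (simp add: sigH_def clH_def)
lemma sigH_Z: "m \<ge> 3 \<Longrightarrow> k = m - 1 \<Longrightarrow> sigH m f (k,i) = ((k + fst (tabH!3!i!f)) mod m, (i + snd (tabH!3!i!f)) mod 3)"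
  by (simp add: sigH_def clH_def)


definition nxt :: "nat \<Rightarrow> nat \<Rightarrow> nat" where "nxt N p = (if p + 1 = N then 0 else p + 1)"

lemma stepU0:
  assumes "m = 2*g+3" "k = 2*a" "a < g" "i < 3" "f < 5"
  shows "posH m f (sigH m f (k, i)) = nxt (3*m) (posH m f (k, i))"
proof -
  have d: "m div 2 = g + 1" using assms(1) by simp
  have k: "k < m - 3" using assms by simp
  have "i = 0 \<or> i = 1 \<or> i = 2" using assms by arith
  moreover have "f = 0 \<or> f = 1 \<or> f = 2 \<or> f = 3 \<or> f = 4" using assms by arith
  ultimately show ?thesis unfolding sigH_U[OF k] using assms d
    by (elim disjE; simp add: tabH_def posH_def Let_def nxt_def)
qed

lemma stepU1:
  assumes "m = 2*g+3" "k = 2*a+1" "a < g" "i < 3" "f < 5"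
  shows "posH m f (sigH m f (k, i)) = nxt (3*m) (posH m f (k, i))"
proof -
  have d: "m div 2 = g + 1" using assms(1) by simp
  have k: "k < m - 3" using assms by simp
  have "i = 0 \<or> i = 1 \<or> i = 2" using assms by arith
  moreover have "f = 0 \<or> f = 1 \<or> f = 2 \<or> f = 3 \<or> f = 4" using assms by arith
  ultimately show ?thesis unfolding sigH_U[OF k] using assms d
    by (elim disjE; simp add: tabH_def posH_def Let_def nxt_def)
qed

lemma stepX:
  assumes "m = 2*g+3" "k = 2*g" "i < 3" "f < 5"
  shows "posH m f (sigH m f (k, i)) = nxt (3*m) (posH m f (k, i))"
proof -
  have d: "m div 2 = g + 1" using assms(1) by simp
  have k: "k = m - 3" using assms by simp
  have m3: "m \<ge> 3" using assms by simp
  have "i = 0 \<or> i = 1 \<or> i = 2" using assms by arith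
  moreover have "f = 0 \<or> f = 1 \<or> f = 2 \<or> f = 3 \<or> f = 4" using assms by arith
  ultimately show ?thesis unfolding sigH_X[OF m3 k] using assms d
    by (elim disjE; simp add: tabH_def posH_def Let_def nxt_def)
qed

lemma stepY:
  assumes "m = 2*g+3" "k = 2*g+1" "i < 3" "f < 5"
  shows "posH m f (sigH m f (k, i)) = nxt (3*m) (posH m f (k, i))"
proof -
  have d: "m div 2 = g + 1" using assms(1) by simp
  have k: "k = m - 2" using assms by simp
  have m3: "m \<ge> 3" using assms by simp
  have "i = 0 \<or> i = 1 \<or> i = 2" using assms by arith
  moreover have "f = 0 \<or> f = 1 \<or> f = 2 \<or> f = 3 \<or> f = 4" using assms by arith
  ultimately show ?thesis unfolding sigH_Y[OF m3 k] using assms d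
    by (elim disjE; simp add: tabH_def posH_def Let_def nxt_def)
qed

lemma stepZ:
  assumes "m = 2*g+3" "k = 2*g+2" "i < 3" "f < 5"
  shows "posH m f (sigH m f (k, i)) = nxt (3*m) (posH m f (k, i))"
proof -
  have d: "m div 2 = g + 1" using assms(1) by simp
  have k: "k = m - 1" using assms by simp
  have m3: "m \<ge> 3" using assms by simp
  have "i = 0 \<or> i = 1 \<or> i = 2" using assms by arith
  moreover have "f = 0 \<or> f = 1 \<or> f = 2 \<or> f = 3 \<or> f = 4" using assms by arith
  have z: "Suc (Suc (Suc (2 * g))) mod (2 * g + 3) = 0"
  proof -
    have "Suc (Suc (Suc (2 * g))) = 2*g+3" by simp
    then show ?thesis by (simp only: mod_self)
  qed
  ultimately show ?thesis unfolding sigH_Z[OF m3 k] using assms d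
    by (elim disjE; simp add: tabH_def posH_def Let_def nxt_def z)
qed


lemma posH_step:
  assumes "m = 2*g+3" "k < m" "i < 3" "f < 5"
  shows "posH m f (sigH m f (k, i)) = nxt (3*m) (posH m f (k, i))"
proof -
  have "k < 2*g \<or> k = 2*g \<or> k = 2*g+1 \<or> k = 2*g+2" using assms by arith
  then show ?thesis
  proof (elim disjE)
    assume k: "k < 2*g"
    show ?thesis
    proof (cases "k mod 2 = 0")
      case True
      then have "k = 2 * (k div 2)" using div_mult_mod_eq[of k 2] by simp
      moreover have "k div 2 < g" using k by simp
      ultimately show ?thesis using stepU0[OF assms(1) _ _ assms(3,4)] by blast
    next
      case False
      then have "k = 2 * (k div 2) + 1" using div_mult_mod_eq[of k 2] by simp
      moreover have "k div 2 < g" using k by simp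
      ultimately show ?thesis using stepU1[OF assms(1) _ _ assms(3,4)] by blast
    qed
  qed (use stepX[OF assms(1) _ assms(3,4)] stepY[OF assms(1) _ assms(3,4)] stepZ[OF assms(1) _ assms(3,4)] in auto)
qed

definition G5 :: "(nat \<times> nat) set" where "G5 = {(0,1),(0,2),(1,0),(1,1),(1,2)}"

lemma tab_img: "c < 4 \<Longrightarrow> i < 3 \<Longrightarrow> (\<lambda>f. tabH!c!i!f) ` {..<5} = G5"
proof -
  assume "c < 4" "i < 3"
  then have "c = 0 \<or> c = 1 \<or> c = 2 \<or> c = 3" "i = 0 \<or> i = 1 \<or> i = 2" by arith+
  moreover have "{..<5::nat} = {0,1,2,3,4}" by auto
  ultimately show ?thesis unfolding G5_def by (elim disjE; simp add: tabH_def insert_commute)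
qed

lemma tab_inj: "c < 4 \<Longrightarrow> i < 3 \<Longrightarrow> inj_on (\<lambda>f. tabH!c!i!f) {..<5}"
proof -
  assume a: "c < 4" "i < 3"
  have "card ((\<lambda>f. tabH!c!i!f) ` {..<5}) = card {..<5::nat}"
    unfolding tab_img[OF a] G5_def by simp
  then show ?thesis by (simp add: eq_card_imp_inj_on inj_on_iff_eq_card)
qed

definition tg :: "nat \<Rightarrow> nat \<times> nat \<Rightarrow> nat \<times> nat \<Rightarrow> nat \<times> nat" where
  "tg m x g = ((fst x + fst g) mod m, (snd x + snd g) mod 3)"

definition NbH :: "nat \<Rightarrow> nat \<times> nat \<Rightarrow> (nat \<times> nat) set" where
  "NbH m x = {((fst x + 1) mod m, 0), ((fst x + 1) mod m, 1), ((fst x + 1) mod m, 2),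
              (fst x, (snd x + 1) mod 3), (fst x, (snd x + 2) mod 3)}"

lemma tg_img:
  assumes "m \<ge> 2" "k < m" "i < 3"
  shows "tg m (k, i) ` G5 = NbH m (k, i)"
proof -
  have "i = 0 \<or> i = 1 \<or> i = 2" using assms by arith
  then show ?thesis unfolding G5_def tg_def NbH_def using assms
    by (elim disjE; simp add: insert_commute numeral_2_eq_2)
qed

lemma NbH_card:
  assumes "m \<ge> 2" "k < m" "i < 3"
  shows "card (NbH m (k, i)) = 5"
proof -
  have sk: "(k + 1) mod m \<noteq> k"
  proof (cases "k + 1 < m")
    case True then show ?thesis by simp
  next
    case False then have "k + 1 = m" using assms by simp
    then show ?thesis using assms by simp
  qed
  have "i = 0 \<or> i = 1 \<or> i = 2" using assms by arith
  then show ?thesis unfolding NbH_def using sk by (elim disjE; simp)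
qed

lemma tg_inj:
  assumes "m \<ge> 2" "k < m" "i < 3"
  shows "inj_on (tg m (k, i)) G5"
proof -
  have "card (tg m (k, i) ` G5) = 5" using tg_img[OF assms] NbH_card[OF assms] by simp
  moreover have "card G5 = 5" unfolding G5_def by simp
  moreover have "finite G5" unfolding G5_def by simp
  ultimately show ?thesis by (metis eq_card_imp_inj_on)
qed

lemma sigH_tg: "sigH m f (k, i) = tg m (k, i) (tabH ! clH m k ! i ! f)"
  unfolding sigH_def tg_def by simp

lemma clH_lt: "clH m k < 4" unfolding clH_def by simp

lemma sigH_inj:
  assumes "m \<ge> 2" "k < m" "i < 3" "f < 5" "f' < 5" "sigH m f (k, i) = sigH m f' (k, i)"
  shows "f = f'"
proof -
  have "tabH ! clH m k ! i ! f \<in> G5" "tabH ! clH m k ! i ! f' \<in> G5"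
    using tab_img[OF clH_lt assms(3)] assms by auto
  then have "tabH ! clH m k ! i ! f = tabH ! clH m k ! i ! f'"
    using tg_inj[OF assms(1-3)] assms(6) unfolding sigH_tg inj_on_def by blast
  then show ?thesis using tab_inj[OF clH_lt assms(3)] assms(4,5) unfolding inj_on_def by blast
qed

lemma sigH_img:
  assumes "m \<ge> 2" "k < m" "i < 3"
  shows "(\<lambda>f. sigH m f (k, i)) ` {..<5} = NbH m (k, i)"
proof -
  have "(\<lambda>f. sigH m f (k, i)) ` {..<5} = tg m (k, i) ` ((\<lambda>f. tabH!clH m k!i!f) ` {..<5})"
    unfolding sigH_tg image_image by simp
  then show ?thesis using tab_img[OF clH_lt assms(3)] tg_img[OF assms] by simp
qed


definition Wm :: "nat \<Rightarrow> (nat \<times> nat) set" where "Wm m = {0..<m} \<times> {0..<3}"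

lemma Wm_fin: "finite (Wm m)" unfolding Wm_def by simp
lemma Wm_card: "card (Wm m) = 3 * m" unfolding Wm_def by (simp add: card_cartesian_product)

lemma NbH_props:
  assumes "m \<ge> 2" "k < m" "i < 3" "y \<in> NbH m (k, i)"
  shows "y \<in> Wm m \<and> y \<noteq> (k, i) \<and> (fst y = k \<or> fst y = (k + 1) mod m)"
proof -
  define k' where "k' = (k + 1) mod m"
  define i1 where "i1 = (i + 1) mod 3"
  define i2 where "i2 = (i + 2) mod 3"
  have sk: "k' \<noteq> k"
  proof (cases "k + 1 < m")
    case True then show ?thesis unfolding k'_def by simp
  next
    case False then have "k + 1 = m" using assms by simp
    then show ?thesis unfolding k'_def using assms by simp
  qed
  have k': "k' < m" unfolding k'_def using assms by simp
  have "i = 0 \<or> i = 1 \<or> i = 2" using assms(3) by arith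
  then have i12: "i1 \<noteq> i" "i2 \<noteq> i" "i1 < 3" "i2 < 3" unfolding i1_def i2_def
    by (elim disjE; simp)+
  have "y = (k',0) \<or> y = (k',1) \<or> y = (k',2) \<or> y = (k,i1) \<or> y = (k,i2)"
    using assms(4) unfolding NbH_def k'_def i1_def i2_def by simp
  then show ?thesis using sk k' i12 assms(2) unfolding k'_def[symmetric] Wm_def
    by (elim disjE) simp_all
qed

lemma mod3_cancel:
  fixes x a b :: nat
  assumes "(x + a) mod 3 = (x + b) mod 3"
  shows "a mod 3 = b mod 3"
proof -
  have "(x + a mod 3) mod 3 = (x + b mod 3) mod 3" using assms by (simp add: mod_add_right_eq)
  then show ?thesis using mod_inj_lt[of x "a mod 3" 3 "b mod 3"] by simp
qed

lemma sL_inj: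
  assumes "t < 3" "t' < 3" "(i + sL m t k) mod 3 = (i + sL m t' k) mod 3"
  shows "t = t'"
proof -
  define e where "e = (if k = m - 1 then 1 else 0::nat)"
  have q: "i + sL m t k = i + e + (if k < bL m then 3 - t else t)" for t
    unfolding sL_def e_def by simp
  have "(i + e + (if k < bL m then 3 - t else t)) mod 3 = (i + e + (if k < bL m then 3 - t' else t')) mod 3"
    using assms(3) unfolding q .
  then have h: "(if k < bL m then 3 - t else t) mod 3 = (if k < bL m then 3 - t' else t') mod 3"
    by (rule mod3_cancel)
  have "t = 0 \<or> t = 1 \<or> t = 2" "t' = 0 \<or> t' = 1 \<or> t' = 2" using assms by arith+
  then show ?thesis using h by (cases "k < bL m"; elim disjE; simp)
qed

lemma sigL_inj:
  assumes "t < 3" "t' < 3" "sigL m t (k, i) = sigL m t' (k, i)"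
  shows "t = t'"
  using assms sL_inj[of t t' i m k] unfolding sigL_def by simp

lemma sigL_NbH:
  assumes "k < m"
  shows "sigL m t (k, i) \<in> NbH m (k, i)"
proof -
  define j where "j = (i + sL m t k) mod 3"
  have "j < 3" unfolding j_def by simp
  then have "j = 0 \<or> j = 1 \<or> j = 2" by arith
  moreover have "sigL m t (k, i) = ((k + 1) mod m, j)" unfolding sigL_def j_def by simp
  ultimately show ?thesis unfolding NbH_def by auto
qed

lemma sigL_surj:
  assumes "j < 3"
  shows "\<exists>t<3. sigL m t (k, i) = ((k + 1) mod m, j)"
proof -
  let ?g = "\<lambda>t. (i + sL m t k) mod 3"
  have inj: "inj_on ?g {..<3}" using sL_inj unfolding inj_on_def by blast
  have "?g ` {..<3} \<subseteq> {..<3}" by auto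
  moreover have "card (?g ` {..<3}) = card {..<3::nat}" using inj by (simp add: card_image)
  ultimately have "?g ` {..<3} = {..<3}" by (simp add: card_subset_eq)
  then have "j \<in> ?g ` {..<3}" using assms by simp
  then obtain t where "t < 3" "?g t = j" by auto
  then show ?thesis unfolding sigL_def by auto
qed

lemma sigL_W:
  assumes "m \<ge> 3" "x \<in> Wm m"
  shows "sigL m t x \<in> Wm m \<and> sigL m t x \<noteq> x"
proof -
  obtain k i where x0: "x = (k, i)" by (cases x)
  then have x: "x = (k, i)" "k < m" "i < 3" using assms(2) unfolding Wm_def by auto
  show ?thesis using NbH_props[OF _ x(2,3) sigL_NbH[OF x(2)]] assms(1) x(1) by auto
qed

lemma sigH_W:
  assumes "m = 2 * g + 3" "f < 5" "x \<in> Wm m"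
  shows "sigH m f x \<in> NbH m x \<and> sigH m f x \<in> Wm m \<and> sigH m f x \<noteq> x"
proof -
  obtain k i where x0: "x = (k, i)" by (cases x)
  then have x: "x = (k, i)" "k < m" "i < 3" using assms(3) unfolding Wm_def by auto
  have m2: "m \<ge> 2" using assms by simp
  have "sigH m f (k, i) \<in> NbH m (k, i)" using sigH_img[OF m2 x(2,3)] assms(2) by auto
  then show ?thesis using NbH_props[OF m2 x(2,3)] x(1) by auto
qed

lemma sigL_cycle:
  assumes "m \<ge> 3" "t < 3"
  shows "\<exists>L. distinct L \<and> length L = 3 * m \<and> set L = Wm m \<and> dcycle_arcs L = (\<lambda>x. (x, sigL m t x)) ` Wm m"
proof (rule cyc_from_pos[OF Wm_fin Wm_card, where z="(0,0)" and \<sigma>="sigL m t" and pos="posL m t"])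
  show "(0, 0) \<in> Wm m" using assms unfolding Wm_def by simp
  show "sigL m t x \<in> Wm m" if "x \<in> Wm m" for x
    using sigL_W[OF assms(1) that] by simp
  show "posL m t (sigL m t x) mod (3 * m) = (posL m t x + 1) mod (3 * m)" if "x \<in> Wm m" for x
  proof -
    obtain k i where x0: "x = (k, i)" by (cases x)
    then have x: "x = (k, i)" "k < m" "i < 3" using that unfolding Wm_def by auto
    show ?thesis using posL_step[OF assms(1,2) x(2,3)] unfolding x(1) by auto
  qed
qed

lemma sigH_cycle:
  assumes "m = 2 * g + 3" "f < 5"
  shows "\<exists>L. distinct L \<and> length L = 3 * m \<and> set L = Wm m \<and> dcycle_arcs L = (\<lambda>x. (x, sigH m f x)) ` Wm m"
proof (rule cyc_from_pos[OF Wm_fin Wm_card, where z="(0,0)" and \<sigma>="sigH m f" and pos="posH m f"])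
  show "(0, 0) \<in> Wm m" using assms unfolding Wm_def by simp
  show "sigH m f x \<in> Wm m" if "x \<in> Wm m" for x
    using sigH_W[OF assms that] by simp
  show "posH m f (sigH m f x) mod (3 * m) = (posH m f x + 1) mod (3 * m)" if "x \<in> Wm m" for x
  proof -
    obtain k i where x0: "x = (k, i)" by (cases x)
    then have x: "x = (k, i)" "k < m" "i < 3" using that unfolding Wm_def by auto
    show ?thesis using posH_step[OF assms(1) x(2,3) assms(2)] unfolding x(1) nxt_def by auto
  qed
qed


definition phi :: "nat list \<Rightarrow> nat \<times> nat \<Rightarrow> nat" where
  "phi c x = 3 * (c ! fst x) + snd x"

definition arcsOf :: "nat \<Rightarrow> nat list set \<Rightarrow> (nat \<times> nat \<Rightarrow> nat \<times> nat) \<Rightarrow> (nat \<times> nat) set" where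
  "arcsOf m Cs \<sigma> = {(phi c x, phi c (\<sigma> x)) | c x. c \<in> Cs \<and> x \<in> Wm m}"

definition goodCs :: "nat \<Rightarrow> nat list set \<Rightarrow> bool" where
  "goodCs m Cs \<longleftrightarrow> (\<forall>c\<in>Cs. distinct c \<and> length c = m) \<and>
     (\<forall>c\<in>Cs. \<forall>d\<in>Cs. c \<noteq> d \<longrightarrow> set c \<inter> set d = {}) \<and> \<Union>(set ` Cs) = {0..<2*m}"

lemma phi_decode:
  assumes "x \<in> Wm m"
  shows "phi c x div 3 = c ! fst x" "phi c x mod 3 = snd x"
  using assms unfolding phi_def Wm_def by auto

lemma phi_inj:
  assumes "distinct c" "length c = m"
  shows "inj_on (phi c) (Wm m)"
proof (rule inj_onI)
  fix x y assume xy: "x \<in> Wm m" "y \<in> Wm m" "phi c x = phi c y"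
  have c1: "c ! fst x = c ! fst y"
  proof -
    have "c ! fst x = phi c x div 3" by (simp add: phi_decode[OF xy(1)])
    also have "\<dots> = phi c y div 3" using xy(3) by simp
    also have "\<dots> = c ! fst y" by (simp add: phi_decode[OF xy(2)])
    finally show ?thesis .
  qed
  have c2: "snd x = snd y"
  proof -
    have "snd x = phi c x mod 3" by (simp add: phi_decode[OF xy(1)])
    also have "\<dots> = phi c y mod 3" using xy(3) by simp
    also have "\<dots> = snd y" by (simp add: phi_decode[OF xy(2)])
    finally show ?thesis .
  qed
  have l: "fst x < length c" "fst y < length c" using xy(1,2) assms(2) unfolding Wm_def by auto
  have "fst x = fst y" using nth_eq_iff_index_eq[OF assms(1) l] c1 by simp
  then show "x = y" using c2 by (simp add: prod_eq_iff)
qed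

lemma phi_lt:
  assumes "x \<in> Wm m" "length c = m" "set c \<subseteq> {0..<2*m}"
  shows "phi c x < 6 * m"
proof -
  have "fst x < m" "snd x < 3" using assms unfolding Wm_def by auto
  then have "c ! fst x \<in> set c" using assms by simp
  then have "c ! fst x < 2 * m" using assms by auto
  then show ?thesis using \<open>snd x < 3\<close> unfolding phi_def by simp
qed

lemma same_cycle:
  assumes "goodCs m Cs" "c1 \<in> Cs" "c2 \<in> Cs" "x1 \<in> Wm m" "x2 \<in> Wm m" "phi c1 x1 = phi c2 x2"
  shows "c1 = c2 \<and> x1 = x2"
proof -
  have e: "c1 ! fst x1 = c2 ! fst x2"
  proof -
    have "c1 ! fst x1 = phi c1 x1 div 3" by (simp add: phi_decode[OF assms(4)])
    also have "\<dots> = phi c2 x2 div 3" using assms(6) by simp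
    also have "\<dots> = c2 ! fst x2" by (simp add: phi_decode[OF assms(5)])
    finally show ?thesis .
  qed
  have gc: "\<forall>c\<in>Cs. distinct c \<and> length c = m" "\<forall>c\<in>Cs. \<forall>d\<in>Cs. c \<noteq> d \<longrightarrow> set c \<inter> set d = {}"
    using assms(1) unfolding goodCs_def by simp_all
  have l: "length c1 = m" "length c2 = m" "distinct c1" using gc(1) assms(2,3) by simp_all
  have "fst x1 < m" "fst x2 < m" using assms(4,5) unfolding Wm_def by auto
  then have m1: "c1 ! fst x1 \<in> set c1" and m2: "c2 ! fst x2 \<in> set c2" using l by simp_all
  have "c1 = c2"
  proof (rule ccontr)
    assume "c1 \<noteq> c2"
    then have "set c1 \<inter> set c2 = {}" using gc(2) assms(2,3) by simp
    then show False using m1 m2 e by auto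
  qed
  moreover have "x1 = x2" using phi_inj[OF l(3,1)] assms(4-6) \<open>c1 = c2\<close> unfolding inj_on_def by simp
  ultimately show ?thesis by simp
qed

lemma lift_factor:
  assumes m2: "m \<ge> 2" and gc: "goodCs m Cs"
    and L: "distinct L" "length L = 3 * m" "set L = Wm m" "dcycle_arcs L = (\<lambda>x. (x, \<sigma> x)) ` Wm m"
    and sg: "\<And>x. x \<in> Wm m \<Longrightarrow> \<sigma> x \<in> Wm m \<and> \<sigma> x \<noteq> x"
  shows "is_dcycle_factor (3 * m) {0..<6 * m} (complete_sym_digraph (6 * m)) (arcsOf m Cs \<sigma>)"
proof -
  have cp: "distinct c" "length c = m" "set c \<subseteq> {0..<2*m}" if "c \<in> Cs" for c
    using gc that unfolding goodCs_def by auto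
  define Cs' where "Cs' = (\<lambda>c. map (phi c) L) ` Cs"
  have 1: "\<forall>c'\<in>Cs'. distinct c' \<and> length c' = 3 * m"
    unfolding Cs'_def using L phi_inj cp by (auto simp: distinct_map)
  have st: "set (map (phi c) L) = phi c ` Wm m" for c using L by simp
  have 2: "\<forall>c'\<in>Cs'. \<forall>d'\<in>Cs'. c' \<noteq> d' \<longrightarrow> set c' \<inter> set d' = {}"
  proof (intro ballI impI)
    fix c' d' assume a: "c' \<in> Cs'" "d' \<in> Cs'" "c' \<noteq> d'"
    then obtain c d where cd: "c \<in> Cs" "d \<in> Cs" "c' = map (phi c) L" "d' = map (phi d) L" unfolding Cs'_def by auto
    show "set c' \<inter> set d' = {}"
    proof (rule ccontr)
      assume "set c' \<inter> set d' \<noteq> {}"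
      then obtain x y where xy: "x \<in> Wm m" "y \<in> Wm m" "phi c x = phi d y" using cd st by auto
      then have "c = d" using same_cycle[OF gc cd(1,2) xy(1,2)] by simp
      then show False using a cd by simp
    qed
  qed
  have 3: "\<Union>(set ` Cs') = {0..<6 * m}"
  proof
    show "\<Union>(set ` Cs') \<subseteq> {0..<6 * m}"
    proof
      fix u assume "u \<in> \<Union>(set ` Cs')"
      then obtain c where c: "c \<in> Cs" "u \<in> set (map (phi c) L)" unfolding Cs'_def by auto
      then obtain x where x: "x \<in> Wm m" "u = phi c x" using st by auto
      show "u \<in> {0..<6 * m}" using phi_lt[OF x(1) cp(2,3)[OF c(1)]] x(2) by simp
    qed
  next
    show "{0..<6 * m} \<subseteq> \<Union>(set ` Cs')"
    proof
      fix u assume u: "u \<in> {0..<6 * m}"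
      then have "u div 3 \<in> {0..<2*m}" by auto
      then have "u div 3 \<in> \<Union>(set ` Cs)" using gc unfolding goodCs_def by simp
      then obtain c where c: "c \<in> Cs" "u div 3 \<in> set c" by blast
      then obtain k where k: "k < length c" "c ! k = u div 3" by (auto simp: in_set_conv_nth)
      have x: "(k, u mod 3) \<in> Wm m" using k cp[OF c(1)] unfolding Wm_def by auto
      have "phi c (k, u mod 3) = u" unfolding phi_def using k by simp
      then have "u \<in> set (map (phi c) L)" using st x by (metis image_eqI)
      then show "u \<in> \<Union>(set ` Cs')" using c unfolding Cs'_def by auto
    qed
  qed
  have 4: "arcsOf m Cs \<sigma> = \<Union>(dcycle_arcs ` Cs')"
  proof -
    have "dcycle_arcs (map (phi c) L) = (\<lambda>x. (phi c x, phi c (\<sigma> x))) ` Wm m" for c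
      unfolding dcycle_arcs_map L(4) image_image by simp
    then have "\<Union>(dcycle_arcs ` Cs') = (\<Union>c\<in>Cs. (\<lambda>x. (phi c x, phi c (\<sigma> x))) ` Wm m)"
      unfolding Cs'_def image_image by simp
    also have "\<dots> = arcsOf m Cs \<sigma>" unfolding arcsOf_def by blast
    finally show ?thesis by simp
  qed
  have 5: "arcsOf m Cs \<sigma> \<subseteq> complete_sym_digraph (6 * m)"
  proof
    fix e assume "e \<in> arcsOf m Cs \<sigma>"
    then obtain c x where cx: "c \<in> Cs" "x \<in> Wm m" "e = (phi c x, phi c (\<sigma> x))" unfolding arcsOf_def by auto
    have "phi c x \<noteq> phi c (\<sigma> x)" using phi_inj[OF cp(1,2)[OF cx(1)]] sg[OF cx(2)] cx(2) unfolding inj_on_def by metis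
    moreover have "phi c x < 6 * m" "phi c (\<sigma> x) < 6 * m" using phi_lt cp[OF cx(1)] cx(2) sg[OF cx(2)] by auto
    ultimately show "e \<in> complete_sym_digraph (6 * m)" unfolding complete_sym_digraph_def cx(3) by simp
  qed
  have ex: "\<exists>CC. (\<forall>c\<in>CC. distinct c \<and> length c = 3 * m) \<and>
           (\<forall>c\<in>CC. \<forall>d\<in>CC. c \<noteq> d \<longrightarrow> set c \<inter> set d = {}) \<and>
           \<Union>(set ` CC) = {0..<6 * m} \<and>
           arcsOf m Cs \<sigma> = \<Union>(dcycle_arcs ` CC)"
    by (rule exI[of _ Cs'], intro conjI, fact 1, fact 2, fact 3, fact 4)
  show ?thesis unfolding is_dcycle_factor_def using 5 ex by (simp only: simp_thms)
qed


lemma arcF: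
  assumes "goodCs m Cs" "F = \<Union>(dcycle_arcs ` Cs)" "c \<in> Cs" "k < m"
  shows "(c ! k, c ! ((k + 1) mod m)) \<in> F"
proof -
  have "length c = m" using assms unfolding goodCs_def by simp
  then have "(c ! k, c ! ((k + 1) mod m)) \<in> dcycle_arcs c" unfolding dcycle_arcs_def using assms(4) by auto
  then show ?thesis using assms(2,3) by auto
qed

lemma cyc_step_ne:
  assumes "goodCs m Cs" "c \<in> Cs" "k < m" "m \<ge> 2"
  shows "c ! ((k + 1) mod m) \<noteq> c ! k"
proof -
  have l: "length c = m" "distinct c" using assms unfolding goodCs_def by auto
  have sk: "(k + 1) mod m \<noteq> k"
  proof (cases "k + 1 < m")
    case True then show ?thesis by simp
  next
    case False then have "k + 1 = m" using assms by simp
    then show ?thesis using assms by simp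
  qed
  have "(k + 1) mod m < m" using assms by simp
  then show ?thesis using nth_eq_iff_index_eq[OF l(2)] l(1) assms(3) sk by simp
qed

lemma decL:
  assumes "m \<ge> 3" "(k, i) \<in> Wm m"
  shows "phi c (sigL m t (k, i)) div 3 = c ! ((k + 1) mod m)"
proof -
  have "sigL m t (k, i) \<in> Wm m" using sigL_W[OF assms] by simp
  then show ?thesis using phi_decode(1) unfolding sigL_def by simp
qed

lemma decH:
  assumes "m = 2 * g + 3" "f < 5" "(k, i) \<in> Wm m"
  shows "phi c (sigH m f (k, i)) div 3 = c ! k \<or> phi c (sigH m f (k, i)) div 3 = c ! ((k + 1) mod m)"
proof -
  have w: "sigH m f (k, i) \<in> NbH m (k, i)" "sigH m f (k, i) \<in> Wm m" using sigH_W[OF assms] by auto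
  have "k < m" "i < 3" "m \<ge> 2" using assms unfolding Wm_def by auto
  then have fd: "fst (sigH m f (k, i)) = k \<or> fst (sigH m f (k, i)) = (k + 1) mod m"
    using NbH_props w(1) by blast
  have d: "phi c (sigH m f (k, i)) div 3 = c ! fst (sigH m f (k, i))" using phi_decode(1)[OF w(2)] .
  from fd show ?thesis
  proof
    assume "fst (sigH m f (k, i)) = k" then show ?thesis using d by simp
  next
    assume "fst (sigH m f (k, i)) = (k + 1) mod m" then show ?thesis using d by simp
  qed
qed

lemma Wm_pair: "x \<in> Wm m \<Longrightarrow> \<exists>k i. x = (k, i) \<and> k < m \<and> i < 3"
  unfolding Wm_def by auto

theorem mainTheorem9:
  fixes m :: nat
  assumes "odd m" and "m > 0"
    and "has_dcycle_factorization m {0..<2*m} (complete_sym_digraph (2*m))"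
  shows "has_dcycle_factorization (3*m) {0..<6*m} (complete_sym_digraph (6*m))"
proof -
  define A where "A = complete_sym_digraph (2*m)"
  define A6 where "A6 = complete_sym_digraph (6*m)"
  obtain FF where FF1': "\<forall>F\<in>FF. is_dcycle_factor m {0..<2*m} A F"
     and FF2': "\<forall>F\<in>FF. \<forall>G\<in>FF. F \<noteq> G \<longrightarrow> F \<inter> G = {}" and FF3: "\<Union>FF = A"
    using assms(3) unfolding has_dcycle_factorization_def A_def[symmetric] by (elim exE conjE)
  have FF1: "\<And>F. F \<in> FF \<Longrightarrow> is_dcycle_factor m {0..<2*m} A F" using FF1' by simp
  have FF2: "\<And>F G. F \<in> FF \<Longrightarrow> G \<in> FF \<Longrightarrow> F \<noteq> G \<Longrightarrow> F \<inter> G = {}" using FF2' by simp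
  have A01: "(0, 1) \<in> A" unfolding A_def complete_sym_digraph_def using assms(2) by simp
  then obtain F0 where F0: "F0 \<in> FF" using FF3 by blast
  define CS where "CS F = (SOME Cs. goodCs m Cs \<and> F = \<Union>(dcycle_arcs ` Cs))" for F
  have CS: "goodCs m (CS F) \<and> F = \<Union>(dcycle_arcs ` (CS F))" if "F \<in> FF" for F
  proof -
    have "\<exists>Cs. goodCs m Cs \<and> F = \<Union>(dcycle_arcs ` Cs)"
    proof -
      have "\<exists>Cs. (\<forall>c\<in>Cs. distinct c \<and> length c = m) \<and> (\<forall>c\<in>Cs. \<forall>d\<in>Cs. c \<noteq> d \<longrightarrow> set c \<inter> set d = {}) \<and>
           \<Union>(set ` Cs) = {0..<2*m} \<and> F = \<Union>(dcycle_arcs ` Cs)"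
        using FF1[OF that] unfolding is_dcycle_factor_def by (rule conjunct2)
      then show ?thesis unfolding goodCs_def by (simp only: conj_assoc)
    qed
    then show ?thesis unfolding CS_def by (rule someI_ex)
  qed
  have FA: "F \<subseteq> A" if "F \<in> FF" for F using FF1[OF that] unfolding is_dcycle_factor_def by (rule conjunct1)
  have m3: "m \<ge> 3"
  proof (rule ccontr)
    assume "\<not> m \<ge> 3"
    then have "m = 1 \<or> m = 2" using assms(2) by arith
    then have m1: "m = 1" using assms(1) by auto
    have gc: "goodCs m (CS F0)" and F0e: "F0 = \<Union>(dcycle_arcs ` (CS F0))" using CS[OF F0] by auto
    have "0 \<in> \<Union>(set ` CS F0)" using gc m1 unfolding goodCs_def by simp
    then obtain c where c: "c \<in> CS F0" "0 \<in> set c" by blast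
    have "(c ! 0, c ! ((0 + 1) mod m)) \<in> F0" using arcF[OF gc F0e c(1)] m1 by simp
    then have "(c ! 0, c ! 0) \<in> A" using FA[OF F0] m1 by auto
    then show False unfolding A_def complete_sym_digraph_def by simp
  qed
  obtain g where g: "m = 2 * g + 3"
  proof -
    have "m = 2 * (m div 2) + 1" using assms(1) by simp
    then have "m = 2 * (m div 2 - 1) + 3" using m3 by simp
    then show ?thesis using that by blast
  qed
  have m2: "m \<ge> 2" using m3 by simp
  have "\<forall>t. \<exists>L. t < 3 \<longrightarrow> distinct L \<and> length L = 3 * m \<and> set L = Wm m \<and> dcycle_arcs L = (\<lambda>x. (x, sigL m t x)) ` Wm m"
    using sigL_cycle[OF m3] by blast
  then obtain LL where LL: "\<And>t. t < 3 \<Longrightarrow> distinct (LL t) \<and> length (LL t) = 3 * m \<and> set (LL t) = Wm m \<and> dcycle_arcs (LL t) = (\<lambda>x. (x, sigL m t x)) ` Wm m"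
    by metis
  have "\<forall>f. \<exists>L. f < 5 \<longrightarrow> distinct L \<and> length L = 3 * m \<and> set L = Wm m \<and> dcycle_arcs L = (\<lambda>x. (x, sigH m f x)) ` Wm m"
    using sigH_cycle[OF g] by blast
  then obtain LH where LH: "\<And>f. f < 5 \<Longrightarrow> distinct (LH f) \<and> length (LH f) = 3 * m \<and> set (LH f) = Wm m \<and> dcycle_arcs (LH f) = (\<lambda>x. (x, sigH m f x)) ` Wm m"
    by metis
  define GL where "GL F t = arcsOf m (CS F) (sigL m t)" for F t
  define GH where "GH f = arcsOf m (CS F0) (sigH m f)" for f
  define GG where "GG = (\<lambda>(F, t). GL F t) ` ((FF - {F0}) \<times> {..<3}) \<union> GH ` {..<5}"
  have facL: "is_dcycle_factor (3 * m) {0..<6 * m} A6 (GL F t)" if "F \<in> FF" "t < 3" for F t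
    unfolding GL_def A6_def
    using lift_factor[OF m2 conjunct1[OF CS[OF that(1)]]] LL[OF that(2)] sigL_W[OF m3] by blast
  have facH: "is_dcycle_factor (3 * m) {0..<6 * m} A6 (GH f)" if "f < 5" for f
  proof -
    have "\<And>x. x \<in> Wm m \<Longrightarrow> sigH m f x \<in> Wm m \<and> sigH m f x \<noteq> x" using sigH_W[OF g that] by blast
    then show ?thesis unfolding GH_def A6_def
      using lift_factor[OF m2 conjunct1[OF CS[OF F0]]] LH[OF that] by blast
  qed
  have fac: "\<forall>G\<in>GG. is_dcycle_factor (3 * m) {0..<6 * m} A6 G"
    unfolding GG_def using facL facH by auto
  have gcF: "goodCs m (CS F)" "F = \<Union>(dcycle_arcs ` CS F)" if "F \<in> FF" for F using CS[OF that] by auto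
  have memArc: "\<exists>c x. c \<in> Cs \<and> x \<in> Wm m \<and> e = (phi c x, phi c (\<sigma> x))" if "e \<in> arcsOf m Cs \<sigma>" for e Cs \<sigma>
    using that unfolding arcsOf_def by blast
  have u_eq: "c1 ! k1 = c2 ! k2" if "phi c1 (k1, i1) = phi c2 (k2, i2)" "(k1, i1) \<in> Wm m" "(k2, i2) \<in> Wm m"
    for c1 c2 k1 k2 i1 i2
    using phi_decode(1)[OF that(2), of c1] phi_decode(1)[OF that(3), of c2] that(1) by simp
  have disj: "\<forall>G1\<in>GG. \<forall>G2\<in>GG. G1 \<noteq> G2 \<longrightarrow> G1 \<inter> G2 = {}"
  proof (intro ballI impI)
    fix G1 G2 assume G: "G1 \<in> GG" "G2 \<in> GG" "G1 \<noteq> G2"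
    show "G1 \<inter> G2 = {}"
    proof (rule ccontr)
      assume "G1 \<inter> G2 \<noteq> {}"
      then obtain e where e: "e \<in> G1" "e \<in> G2" by blast
      have LLc: "False" if hLL: "F1 \<in> FF - {F0}" "F2 \<in> FF - {F0}" "t1 < 3" "t2 < 3" "G1 = GL F1 t1" "G2 = GL F2 t2" for F1 F2 t1 t2
      proof -
        obtain c1 x1 where a1: "c1 \<in> CS F1" "x1 \<in> Wm m" "e = (phi c1 x1, phi c1 (sigL m t1 x1))"
          using memArc e(1) hLL(5) unfolding GL_def by blast
        obtain c2 x2 where a2: "c2 \<in> CS F2" "x2 \<in> Wm m" "e = (phi c2 x2, phi c2 (sigL m t2 x2))"
          using memArc e(2) hLL(6) unfolding GL_def by blast
        obtain k1 i1 where x1: "x1 = (k1, i1)" "k1 < m" "i1 < 3" using Wm_pair[OF a1(2)] by blast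
        obtain k2 i2 where x2: "x2 = (k2, i2)" "k2 < m" "i2 < 3" using Wm_pair[OF a2(2)] by blast
        have f1: "F1 \<in> FF" and f2: "F2 \<in> FF" using hLL by auto
        have uu: "phi c1 x1 = phi c2 x2" using a1(3) a2(3) by simp
        have ku: "c1 ! k1 = c2 ! k2" using u_eq uu a1(2) a2(2) x1(1) x2(1) by blast
        have kv: "c1 ! ((k1 + 1) mod m) = c2 ! ((k2 + 1) mod m)"
          using decL[OF m3, of k1 i1 c1 t1] decL[OF m3, of k2 i2 c2 t2] a1 a2 x1(1) x2(1) by simp
        have "(c1 ! k1, c1 ! ((k1 + 1) mod m)) \<in> F1" using arcF[OF gcF[OF f1] a1(1) x1(2)] .
        moreover have "(c1 ! k1, c1 ! ((k1 + 1) mod m)) \<in> F2" using arcF[OF gcF[OF f2] a2(1) x2(2)] ku kv by simp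
        ultimately have "F1 = F2" using FF2[OF f1 f2] by blast
        then have "c1 = c2 \<and> x1 = x2" using same_cycle[OF gcF(1)[OF f1] a1(1) _ a1(2) a2(2) uu] a2(1) by simp
        then have cx: "c1 = c2" "x1 = x2" by auto
        have "phi c1 (sigL m t1 x1) = phi c1 (sigL m t2 x1)" using a1(3) a2(3) cx by simp
        moreover have "sigL m t1 x1 \<in> Wm m" "sigL m t2 x1 \<in> Wm m" using sigL_W[OF m3 a1(2)] by auto
        moreover have "distinct c1" "length c1 = m" using gcF(1)[OF f1] a1(1) unfolding goodCs_def by auto
        ultimately have "sigL m t1 x1 = sigL m t2 x1" using phi_inj unfolding inj_on_def by blast
        then have "t1 = t2" using sigL_inj[OF hLL(3,4)] x1(1) by simp
        then show False using G(3) hLL(5,6) \<open>F1 = F2\<close> by simp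
      qed
      have LHc: "False" if hLH: "F1 \<in> FF - {F0}" "t1 < 3" "f2 < 5" "e \<in> GL F1 t1" "e \<in> GH f2" for F1 t1 f2
      proof -
        obtain c1 x1 where a1: "c1 \<in> CS F1" "x1 \<in> Wm m" "e = (phi c1 x1, phi c1 (sigL m t1 x1))"
          using memArc hLH(4) unfolding GL_def by blast
        obtain c2 x2 where a2: "c2 \<in> CS F0" "x2 \<in> Wm m" "e = (phi c2 x2, phi c2 (sigH m f2 x2))"
          using memArc hLH(5) unfolding GH_def by blast
        obtain k1 i1 where x1: "x1 = (k1, i1)" "k1 < m" "i1 < 3" using Wm_pair[OF a1(2)] by blast
        obtain k2 i2 where x2: "x2 = (k2, i2)" "k2 < m" "i2 < 3" using Wm_pair[OF a2(2)] by blast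
        have f1: "F1 \<in> FF" and nf: "F1 \<noteq> F0" using hLH by auto
        have uu: "phi c1 x1 = phi c2 x2" using a1(3) a2(3) by simp
        have ku: "c1 ! k1 = c2 ! k2" using u_eq uu a1(2) a2(2) x1(1) x2(1) by blast
        have v1: "phi c1 (sigL m t1 x1) div 3 = c1 ! ((k1 + 1) mod m)" using decL[OF m3] a1(2) x1(1) by simp
        have vv: "phi c1 (sigL m t1 x1) = phi c2 (sigH m f2 x2)" using a1(3) a2(3) by simp
        have "c1 ! ((k1 + 1) mod m) = c2 ! k2 \<or> c1 ! ((k1 + 1) mod m) = c2 ! ((k2 + 1) mod m)"
          using decH[OF g hLH(3), of k2 i2 c2] a2(2) x2(1) v1 vv by simp
        then show False
        proof
          assume "c1 ! ((k1 + 1) mod m) = c2 ! k2"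
          then show False using cyc_step_ne[OF gcF(1)[OF f1] a1(1) x1(2) m2] ku by simp
        next
          assume kv: "c1 ! ((k1 + 1) mod m) = c2 ! ((k2 + 1) mod m)"
          have "(c1 ! k1, c1 ! ((k1 + 1) mod m)) \<in> F1" using arcF[OF gcF[OF f1] a1(1) x1(2)] .
          moreover have "(c1 ! k1, c1 ! ((k1 + 1) mod m)) \<in> F0" using arcF[OF gcF[OF F0] a2(1) x2(2)] ku kv by simp
          ultimately show False using FF2[OF f1 F0 nf] by blast
        qed
      qed
      have HHc: "False" if hHH: "f1 < 5" "f2 < 5" "G1 = GH f1" "G2 = GH f2" for f1 f2
      proof -
        obtain c1 x1 where a1: "c1 \<in> CS F0" "x1 \<in> Wm m" "e = (phi c1 x1, phi c1 (sigH m f1 x1))"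
          using memArc e(1) hHH(3) unfolding GH_def by blast
        obtain c2 x2 where a2: "c2 \<in> CS F0" "x2 \<in> Wm m" "e = (phi c2 x2, phi c2 (sigH m f2 x2))"
          using memArc e(2) hHH(4) unfolding GH_def by blast
        obtain k1 i1 where x1: "x1 = (k1, i1)" "k1 < m" "i1 < 3" using Wm_pair[OF a1(2)] by blast
        have uu: "phi c1 x1 = phi c2 x2" using a1(3) a2(3) by simp
        then have "c1 = c2 \<and> x1 = x2" using same_cycle[OF gcF(1)[OF F0] a1(1) a2(1) a1(2) a2(2)] by simp
        then have cx: "c1 = c2" "x1 = x2" by auto
        have "phi c1 (sigH m f1 x1) = phi c1 (sigH m f2 x1)" using a1(3) a2(3) cx by simp
        moreover have "sigH m f1 x1 \<in> Wm m" "sigH m f2 x1 \<in> Wm m" using sigH_W[OF g _ a1(2)] hHH by auto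
        moreover have "distinct c1" "length c1 = m" using gcF(1)[OF F0] a1(1) unfolding goodCs_def by auto
        ultimately have "sigH m f1 x1 = sigH m f2 x1" using phi_inj unfolding inj_on_def by blast
        then have "f1 = f2" using sigH_inj[OF m2 x1(2,3) hHH(1,2)] x1(1) by simp
        then show False using G(3) hHH(3,4) by simp
      qed
      show False
      proof -
        have c1: "(\<exists>F t. F \<in> FF - {F0} \<and> t < 3 \<and> G1 = GL F t) \<or> (\<exists>f. f < 5 \<and> G1 = GH f)"
          using G(1) unfolding GG_def by auto
        have c2: "(\<exists>F t. F \<in> FF - {F0} \<and> t < 3 \<and> G2 = GL F t) \<or> (\<exists>f. f < 5 \<and> G2 = GH f)"
          using G(2) unfolding GG_def by auto
        show False using c1 c2
        proof (elim disjE exE conjE)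
          fix F1 t1 F2 t2 assume "F1 \<in> FF - {F0}" "t1 < 3" "G1 = GL F1 t1" "F2 \<in> FF - {F0}" "t2 < 3" "G2 = GL F2 t2"
          then show False using LLc by blast
        next
          fix F1 t1 f2 assume "F1 \<in> FF - {F0}" "t1 < 3" "G1 = GL F1 t1" "f2 < 5" "G2 = GH f2"
          then show False using LHc e by blast
        next
          fix F2 t2 f1 assume "f1 < 5" "G1 = GH f1" "F2 \<in> FF - {F0}" "t2 < 3" "G2 = GL F2 t2"
          then show False using LHc e by blast
        next
          fix f1 f2 assume "f1 < 5" "G1 = GH f1" "f2 < 5" "G2 = GH f2"
          then show False using HHc by blast
        qed
      qed
    qed
  qed
  have GLin: "GL F t \<in> GG" if "F \<in> FF" "F \<noteq> F0" "t < 3" for F t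
  proof -
    have "(F, t) \<in> (FF - {F0}) \<times> {..<3}" using that by simp
    then have "(\<lambda>(F, t). GL F t) (F, t) \<in> (\<lambda>(F, t). GL F t) ` ((FF - {F0}) \<times> {..<3})" by (rule imageI)
    then show ?thesis unfolding GG_def by simp
  qed
  have GHin: "GH f \<in> GG" if "f < 5" for f
  proof -
    have "f \<in> {..<5}" using that by simp
    then have "GH f \<in> GH ` {..<5}" by (rule imageI)
    then show ?thesis unfolding GG_def by simp
  qed
  have memH: "(phi c x, phi c (sigH m f x)) \<in> GH f" if "c \<in> CS F0" "x \<in> Wm m" for c x f
    unfolding GH_def arcsOf_def using that by blast
  have memL: "(phi c x, phi c (sigL m t x)) \<in> GL F t" if "c \<in> CS F" "x \<in> Wm m" for c x F t
    unfolding GL_def arcsOf_def using that by blast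
  have un: "\<Union>GG = A6"
  proof
    show "\<Union>GG \<subseteq> A6"
    proof
      fix e assume "e \<in> \<Union>GG"
      then obtain G where G: "G \<in> GG" "e \<in> G" by blast
      have "is_dcycle_factor (3 * m) {0..<6 * m} A6 G" using fac G(1) by blast
      then have "G \<subseteq> A6" unfolding is_dcycle_factor_def by (rule conjunct1)
      then show "e \<in> A6" using G(2) by blast
    qed
  next
    show "A6 \<subseteq> \<Union>GG"
    proof
      fix e assume eA: "e \<in> A6"
      obtain u v where uv0: "e = (u, v)" by (cases e)
      have uv: "u < 6 * m" "v < 6 * m" "u \<noteq> v"
        using eA unfolding uv0 A6_def complete_sym_digraph_def by simp_all
      define y1 where "y1 = u div 3"
      define y2 where "y2 = v div 3"
      define i where "i = u mod 3"
      define j where "j = v mod 3"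
      have ue: "u = 3 * y1 + i" and ve: "v = 3 * y2 + j" unfolding y1_def y2_def i_def j_def by simp_all
      have ij: "i < 3" "j < 3" unfolding i_def j_def by simp_all
      have yl: "y1 < 2 * m" "y2 < 2 * m" using uv(1,2) unfolding y1_def y2_def by simp_all
      show "e \<in> \<Union>GG"
      proof (cases "y1 = y2")
        case False
        then have "(y1, y2) \<in> A" unfolding A_def complete_sym_digraph_def using yl by simp
        then obtain F where F: "F \<in> FF" "(y1, y2) \<in> F" using FF3 by blast
        then obtain c where c: "c \<in> CS F" "(y1, y2) \<in> dcycle_arcs c" using gcF(2)[OF F(1)] by blast
        have lc: "length c = m" using gcF(1)[OF F(1)] c(1) unfolding goodCs_def by simp
        obtain k where k: "k < m" "y1 = c ! k" "y2 = c ! ((k + 1) mod m)"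
          using c(2) lc unfolding dcycle_arcs_def by blast
        have xw: "(k, i) \<in> Wm m" using k ij unfolding Wm_def by simp
        have pu: "phi c (k, i) = u" unfolding phi_def ue k(2) by simp
        have pv: "phi c ((k + 1) mod m, j) = v" unfolding phi_def ve k(3) by simp
        show ?thesis
        proof (cases "F = F0")
          case True
          have "j = 0 \<or> j = 1 \<or> j = 2" using ij by arith
          then have "((k + 1) mod m, j) \<in> NbH m (k, i)" by (elim disjE) (simp_all add: NbH_def)
          then have "((k + 1) mod m, j) \<in> (\<lambda>f. sigH m f (k, i)) ` {..<5}" using sigH_img[OF m2 k(1) ij(1)] by simp
          then obtain f0 where f0: "((k + 1) mod m, j) = sigH m f0 (k, i)" "f0 \<in> {..<5}" by (rule imageE)
          then have f: "f0 < 5" "sigH m f0 (k, i) = ((k + 1) mod m, j)" by simp_all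
          have "(phi c (k, i), phi c (sigH m f0 (k, i))) \<in> GH f0" using memH c(1) True xw by simp
          then have "e \<in> GH f0" unfolding uv0 using pu pv f(2) by simp
          then show ?thesis using GHin[OF f(1)] by blast
        next
          case False
          obtain t where t: "t < 3" "sigL m t (k, i) = ((k + 1) mod m, j)" using sigL_surj[OF ij(2)] by blast
          have "(phi c (k, i), phi c (sigL m t (k, i))) \<in> GL F t" using memL c(1) xw by simp
          then have "e \<in> GL F t" unfolding uv0 using pu pv t(2) by simp
          then show ?thesis using GLin[OF F(1) False t(1)] by blast
        qed
      next
        case True
        then have ij2: "i \<noteq> j" using uv(3) ue ve by auto
        have "y1 \<in> \<Union>(set ` CS F0)" using gcF(1)[OF F0] yl unfolding goodCs_def by simp
        then obtain c where c: "c \<in> CS F0" "y1 \<in> set c" by blast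
        have lc: "length c = m" using gcF(1)[OF F0] c(1) unfolding goodCs_def by simp
        obtain k where k: "k < m" "y1 = c ! k" using c(2) lc by (auto simp: in_set_conv_nth)
        have xw: "(k, i) \<in> Wm m" using k ij unfolding Wm_def by simp
        have pu: "phi c (k, i) = u" unfolding phi_def ue k(2) by simp
        have pv: "phi c (k, j) = v" unfolding phi_def ve True[symmetric] k(2) by simp
        have "i = 0 \<or> i = 1 \<or> i = 2" "j = 0 \<or> j = 1 \<or> j = 2" using ij by arith+
        then have "(k, j) \<in> NbH m (k, i)" using ij2 by (elim disjE) (simp_all add: NbH_def)
        then have "(k, j) \<in> (\<lambda>f. sigH m f (k, i)) ` {..<5}" using sigH_img[OF m2 k(1) ij(1)] by simp
        then obtain f0 where f0: "(k, j) = sigH m f0 (k, i)" "f0 \<in> {..<5}" by (rule imageE)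
        then have f: "f0 < 5" "sigH m f0 (k, i) = (k, j)" by simp_all
        have "(phi c (k, i), phi c (sigH m f0 (k, i))) \<in> GH f0" using memH c(1) xw by simp
        then have "e \<in> GH f0" unfolding uv0 using pu pv f(2) by simp
        then show ?thesis using GHin[OF f(1)] by blast
      qed
    qed
  qed
  show ?thesis unfolding has_dcycle_factorization_def A6_def[symmetric]
    by (rule exI[of _ GG], intro conjI, fact fac, fact disj, fact un)
qed


end
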